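(* Let $C_m$ denote the (unweighted) cycle on $m$ vertices. Then $\mathrm{OPT}(C_m)=m\log_2 m+O(m)$.
   Context: For a graph $G=(V,E)$ with unit edge weights, a hierarchical clustering tree (HC-tree) is a rooted tree whose leaves are in bijection with $V$; its cost is $C_G(\mathcal T)=\sum_{(u,v)\in E}|\mathrm{leaves}(\mathcal T[u\vee v])|$, where $u\vee v$ is the lowest common ancestor of $u,v$ in $\mathcal T$ and $\mathrm{leaves}(\mathcal T[z])$ is the set of leaves of the subtree rooted at $z$. $\mathrm{OPT}(G)$ is the minimum cost over all HC-trees of $G$. *)

theory Defs
  imports Complex_Main "HOL-Library.Landau_Symbols"
begin

datatype 'a hctree = Leaf 'a | Node "'a hctree list"

fun leaves :: "'a hctree \<Rightarrow> 'a list" where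
  "leaves (Leaf x) = [x]"
| "leaves (Node ts) = concat (map leaves ts)"

fun wf_hctree :: "'a hctree \<Rightarrow> bool" where
  "wf_hctree (Leaf x) = True"
| "wf_hctree (Node ts) = (ts \<noteq> [] \<and> (\<forall>t\<in>set ts. wf_hctree t))"

fun subtrees :: "'a hctree \<Rightarrow> 'a hctree set" where
  "subtrees (Leaf x) = {Leaf x}"
| "subtrees (Node ts) = insert (Node ts) (\<Union>t\<in>set ts. subtrees t)"

definition hc_tree :: "'a set \<Rightarrow> 'a hctree \<Rightarrow> bool" where
  "hc_tree V T \<longleftrightarrow> wf_hctree T \<and> distinct (leaves T) \<and> set (leaves T) = V"

text \<open>Number of leaves of the subtree rooted at the lowest common ancestor of the
  endpoints of edge e: the smallest subtree whose leaves contain e.\<close>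
definition lca_leaves :: "'a hctree \<Rightarrow> 'a set \<Rightarrow> nat" where
  "lca_leaves T e = Min {length (leaves t) | t. t \<in> subtrees T \<and> e \<subseteq> set (leaves t)}"

text \<open>Edges are unordered pairs {u,v}; unit weights.\<close>
definition hc_cost :: "'a set set \<Rightarrow> 'a hctree \<Rightarrow> nat" where
  "hc_cost E T = (\<Sum>e\<in>E. lca_leaves T e)"

definition OPT :: "'a set \<Rightarrow> 'a set set \<Rightarrow> nat" where
  "OPT V E = Inf {hc_cost E T | T. hc_tree V T}"

definition cycle_vertices :: "nat \<Rightarrow> nat set" where
  "cycle_vertices m = {0..<m}"

definition cycle_edges :: "nat \<Rightarrow> nat set set" where
  "cycle_edges m = {{i, (i + 1) mod m} | i. i < m}"

end

theory Submission
  imports Defs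
begin

lemma finite_subtrees: "finite (subtrees T)"
  by (induction T) auto

lemma self_subtree: "T \<in> subtrees T"
  by (cases T) auto

lemma subtrees_trans: "t \<in> subtrees T \<Longrightarrow> subtrees t \<subseteq> subtrees T"
  by (induction T) auto

lemma subtree_leaves: "t \<in> subtrees T \<Longrightarrow> set (leaves t) \<subseteq> set (leaves T)"
  by (induction T) auto

lemma leaves_disj:
  "distinct (concat (map leaves ts)) \<Longrightarrow> t \<in> set ts \<Longrightarrow> t' \<in> set ts
   \<Longrightarrow> x \<in> set (leaves t) \<Longrightarrow> x \<in> set (leaves t') \<Longrightarrow> t = t'"
  by (induction ts) auto

lemma distinct_child: "distinct (concat (map leaves ts)) \<Longrightarrow> t \<in> set ts \<Longrightarrow> distinct (leaves t)"
  by (induction ts) auto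

lemma lca_set: "{length (leaves t) | t. t \<in> subtrees T \<and> e \<subseteq> set (leaves t)}
  = (\<lambda>t. length (leaves t)) ` {t \<in> subtrees T. e \<subseteq> set (leaves t)}"
  by auto

lemma lca_le_subtree:
  assumes "t \<in> subtrees T" "e \<subseteq> set (leaves t)"
  shows "lca_leaves T e \<le> lca_leaves t e"
  unfolding lca_leaves_def lca_set
  apply (rule Min_antimono)
  using assms subtrees_trans[OF assms(1)] self_subtree[of t] finite_subtrees[of T]
  by auto

lemma lca_le_length:
  assumes "e \<subseteq> set (leaves T)"
  shows "lca_leaves T e \<le> length (leaves T)"
  unfolding lca_leaves_def lca_set
  apply (rule Min_le)
  using assms self_subtree[of T] finite_subtrees[of T]
  by auto

definition G :: "'a hctree \<Rightarrow> 'a set \<Rightarrow> 'a set \<Rightarrow> nat" where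
  "G T I e = Min ((\<lambda>t. card (set (leaves t) \<inter> I)) ` {t \<in> subtrees T. e \<subseteq> set (leaves t)})"

lemma G_le_lca:
  assumes "e \<subseteq> set (leaves T)"
  shows "G T I e \<le> lca_leaves T e"
proof -
  let ?S = "{t \<in> subtrees T. e \<subseteq> set (leaves t)}"
  have ne: "?S \<noteq> {}" using assms self_subtree[of T] by auto
  have fin: "finite ?S" using finite_subtrees[of T] by auto
  have "lca_leaves T e \<in> (\<lambda>t. length (leaves t)) ` ?S"
    unfolding lca_leaves_def lca_set by (rule Min_in) (use ne fin in auto)
  then obtain t0 where t0: "t0 \<in> ?S" "lca_leaves T e = length (leaves t0)" by auto
  have "G T I e \<le> card (set (leaves t0) \<inter> I)"
    unfolding G_def by (rule Min_le) (use fin t0 in auto)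
  also have "\<dots> \<le> card (set (leaves t0))" by (rule card_mono) auto
  also have "\<dots> \<le> length (leaves t0)" by (rule card_length)
  finally show ?thesis using t0 by simp
qed

lemma G_mono:
  assumes "e \<subseteq> set (leaves T)" "J \<subseteq> I"
  shows "G T J e \<le> G T I e"
proof -
  let ?S = "{t \<in> subtrees T. e \<subseteq> set (leaves t)}"
  have ne: "?S \<noteq> {}" using assms self_subtree[of T] by auto
  have fin: "finite ?S" using finite_subtrees[of T] by auto
  have "G T I e \<in> (\<lambda>t. card (set (leaves t) \<inter> I)) ` ?S"
    unfolding G_def by (rule Min_in) (use ne fin in auto)
  then obtain t0 where t0: "t0 \<in> ?S" "G T I e = card (set (leaves t0) \<inter> I)" by auto
  have "G T J e \<le> card (set (leaves t0) \<inter> J)"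
    unfolding G_def by (rule Min_le) (use fin t0 in auto)
  also have "\<dots> \<le> card (set (leaves t0) \<inter> I)" by (rule card_mono) (use assms in auto)
  finally show ?thesis using t0 by simp
qed

lemma G_full:
  assumes "e \<subseteq> set (leaves T)" "\<forall>t\<in>subtrees T. e \<subseteq> set (leaves t) \<longrightarrow> I \<subseteq> set (leaves t)"
  shows "G T I e \<ge> card I"
proof -
  let ?S = "{t \<in> subtrees T. e \<subseteq> set (leaves t)}"
  have ne: "?S \<noteq> {}" using assms self_subtree[of T] by auto
  have fin: "finite ?S" using finite_subtrees[of T] by auto
  have "G T I e \<in> (\<lambda>t. card (set (leaves t) \<inter> I)) ` ?S"
    unfolding G_def by (rule Min_in) (use ne fin in auto)
  then obtain t0 where t0: "t0 \<in> ?S" "G T I e = card (set (leaves t0) \<inter> I)" by auto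
  have "set (leaves t0) \<inter> I = I" using assms(2) t0(1) by auto
  then show ?thesis using t0 by simp
qed

lemma split_exists:
  "wf_hctree (T::nat hctree) \<Longrightarrow> distinct (leaves T) \<Longrightarrow> {a..<a+n} \<subseteq> set (leaves T) \<Longrightarrow> 2 \<le> n \<Longrightarrow>
   \<exists>k. a < k \<and> k < a + n \<and>
     (\<forall>t\<in>subtrees T. {k - 1, k} \<subseteq> set (leaves t) \<longrightarrow> {a..<a+n} \<subseteq> set (leaves t))"
proof (induction T)
  case (Leaf x)
  have "a \<in> {a..<a+n}" "Suc a \<in> {a..<a+n}" using Leaf.prems(4) by auto
  then have "a \<in> set (leaves (Leaf x))" "Suc a \<in> set (leaves (Leaf x))"
    using subsetD[OF Leaf.prems(3)] by presburger+
  then show ?case by simp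
next
  case (Node ts)
  let ?I = "{a..<a+n}"
  have dist: "distinct (concat (map leaves ts))" using Node.prems by simp
  show ?case
  proof (cases "\<exists>t\<in>set ts. ?I \<subseteq> set (leaves t)")
    case True
    then obtain t where t: "t \<in> set ts" "?I \<subseteq> set (leaves t)" by blast
    have "wf_hctree t" using Node.prems t by auto
    moreover have "distinct (leaves t)" using distinct_child[OF dist t(1)] .
    ultimately obtain k where k: "a < k" "k < a + n"
      "\<forall>s\<in>subtrees t. {k - 1, k} \<subseteq> set (leaves s) \<longrightarrow> ?I \<subseteq> set (leaves s)"
      using Node.IH[OF t(1)] t(2) Node.prems(4) by blast
    have "\<forall>s\<in>subtrees (Node ts). {k - 1, k} \<subseteq> set (leaves s) \<longrightarrow> ?I \<subseteq> set (leaves s)"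
    proof (intro ballI impI)
      fix s assume s: "s \<in> subtrees (Node ts)" "{k - 1, k} \<subseteq> set (leaves s)"
      show "?I \<subseteq> set (leaves s)"
      proof (cases "s = Node ts")
        case True then show ?thesis using Node.prems(3) by simp
      next
        case False
        then obtain t' where t': "t' \<in> set ts" "s \<in> subtrees t'" using s(1) by auto
        have "k \<in> set (leaves t')" using subtree_leaves[OF t'(2)] s(2) by auto
        moreover have "k \<in> set (leaves t)" using t(2) k by auto
        ultimately have "t' = t" using leaves_disj[OF dist t'(1) t(1)] by blast
        then show ?thesis using k(3) t' s(2) by blast
      qed
    qed
    then show ?thesis using k by blast
  next
    case False
    have "\<exists>k. a < k \<and> k < a + n \<and> \<not> (\<exists>t\<in>set ts. {k - 1, k} \<subseteq> set (leaves t))"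
    proof (rule ccontr)
      assume H: "\<not> ?thesis"
      have "a \<in> ?I" using Node.prems(4) by simp
      then have "a \<in> set (leaves (Node ts))" using subsetD[OF Node.prems(3)] by blast
      then obtain t0 where t0: "t0 \<in> set ts" "a \<in> set (leaves t0)" by auto
      have "j < n \<Longrightarrow> a + j \<in> set (leaves t0)" for j
      proof (induction j)
        case 0 then show ?case using t0 by simp
      next
        case (Suc j)
        then have in0: "a + j \<in> set (leaves t0)" by simp
        obtain t' where t': "t' \<in> set ts" "{a + Suc j - 1, a + Suc j} \<subseteq> set (leaves t')"
        proof -
          have "a < a + Suc j" "a + Suc j < a + n" using Suc.prems by simp_all
          then show ?thesis using H that by blast
        qed
        have "t' = t0" using leaves_disj[OF dist t'(1) t0(1), of "a+j"] t'(2) in0 by auto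
        then show ?case using t'(2) by auto
      qed
      then have "?I \<subseteq> set (leaves t0)"
        by (metis atLeastLessThan_iff le_Suc_ex nat_add_left_cancel_less subsetI)
      then show False using False t0 by blast
    qed
    then obtain k where k: "a < k" "k < a + n" "\<not> (\<exists>t\<in>set ts. {k - 1, k} \<subseteq> set (leaves t))"
      by blast
    have "\<forall>s\<in>subtrees (Node ts). {k - 1, k} \<subseteq> set (leaves s) \<longrightarrow> ?I \<subseteq> set (leaves s)"
    proof (intro ballI impI)
      fix s assume s: "s \<in> subtrees (Node ts)" "{k - 1, k} \<subseteq> set (leaves s)"
      show "?I \<subseteq> set (leaves s)"
      proof (cases "s = Node ts")
        case True then show ?thesis using Node.prems(3) by simp
      next
        case False
        then obtain t' where t': "t' \<in> set ts" "s \<in> subtrees t'" using s(1) by auto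
        then show ?thesis using subtree_leaves[OF t'(2)] s(2) k(3) by blast
      qed
    qed
    then show ?thesis using k by blast
  qed
qed

lemma ent_ineq:
  fixes p q :: real
  assumes "p \<ge> 1" "q \<ge> 1"
  shows "(p+q) * log 2 (p+q) \<le> p * log 2 p + q * log 2 q + (p+q)"
proof -
  define n where "n = p + q"
  have np: "n > 0" using assms n_def by simp
  have h1: "ln (n/(2*p)) \<le> n/(2*p) - 1" using ln_le_minus_one np assms by simp
  have h2: "ln (n/(2*q)) \<le> n/(2*q) - 1" using ln_le_minus_one np assms by simp
  have e1: "ln (n/(2*p)) = ln n - ln 2 - ln p" using np assms by (simp add: ln_div ln_mult)
  have e2: "ln (n/(2*q)) = ln n - ln 2 - ln q" using np assms by (simp add: ln_div ln_mult)
  have i1: "p * ln n - p * ln 2 - p * ln p \<le> n/2 - p"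
  proof -
    have "p * (ln n - ln 2 - ln p) \<le> p * (n/(2*p) - 1)"
      using h1 e1 assms by (intro mult_left_mono) auto
    also have "\<dots> = n/2 - p" using assms by (simp add: field_simps)
    finally show ?thesis by (simp add: algebra_simps)
  qed
  have i2: "q * ln n - q * ln 2 - q * ln q \<le> n/2 - q"
  proof -
    have "q * (ln n - ln 2 - ln q) \<le> q * (n/(2*q) - 1)"
      using h2 e2 assms by (intro mult_left_mono) auto
    also have "\<dots> = n/2 - q" using assms by (simp add: field_simps)
    finally show ?thesis by (simp add: algebra_simps)
  qed
  have "n * ln n \<le> p * ln p + q * ln q + n * ln 2"
    using i1 i2 n_def by (simp add: algebra_simps)
  then have "n * ln n / ln 2 \<le> (p * ln p + q * ln q + n * ln 2) / ln 2"
    by (simp add: divide_right_mono)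
  then show ?thesis unfolding n_def[symmetric] log_def by (simp add: add_divide_distrib)
qed


lemma path_lb:
  "wf_hctree (T::nat hctree) \<Longrightarrow> distinct (leaves T) \<Longrightarrow> {a..<a+n} \<subseteq> set (leaves T) \<Longrightarrow>
   real n * log 2 (real n) \<le> (\<Sum>i\<in>{a..<a+n-1}. real (G T {a..<a+n} {i, Suc i}))"
proof (induction n arbitrary: a rule: less_induct)
  case (less n)
  show ?case
  proof (cases "n \<le> 1")
    case True
    then have "n = 0 \<or> n = 1" by auto
    then show ?thesis by auto
  next
    case False
    let ?I = "{a..<a+n}"
    obtain k where k: "a < k" "k < a + n"
      "\<forall>t\<in>subtrees T. {k - 1, k} \<subseteq> set (leaves t) \<longrightarrow> ?I \<subseteq> set (leaves t)"
      using split_exists[OF less.prems] False by auto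
    define p where "p = k - a"
    define q where "q = a + n - k"
    have pq: "p \<ge> 1" "q \<ge> 1" "p < n" "q < n" "p + q = n" using k p_def q_def by auto
    have edge_in: "{i, Suc i} \<subseteq> set (leaves T)" if "i \<in> {a..<a+n-1}" for i
      using that less.prems(3) by auto
    have split1: "{a..<a+n-1} = {a..<k-1} \<union> {k-1..<a+n-1}" using k by auto
    have sum_split: "(\<Sum>i\<in>{a..<a+n-1}. real (G T ?I {i, Suc i})) =
        (\<Sum>i\<in>{a..<k-1}. real (G T ?I {i, Suc i})) + real (G T ?I {k-1, Suc (k-1)})
        + (\<Sum>i\<in>{k..<a+n-1}. real (G T ?I {i, Suc i}))"
    proof -
      have "(\<Sum>i\<in>{a..<a+n-1}. real (G T ?I {i, Suc i})) =
        (\<Sum>i\<in>{a..<k-1}. real (G T ?I {i, Suc i})) + (\<Sum>i\<in>{k-1..<a+n-1}. real (G T ?I {i, Suc i}))"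
        using k by (intro sum.atLeastLessThan_concat[symmetric]) auto
      moreover have "(\<Sum>i\<in>{k-1..<a+n-1}. real (G T ?I {i, Suc i})) =
          real (G T ?I {k-1, Suc (k-1)}) + (\<Sum>i\<in>{Suc (k-1)..<a+n-1}. real (G T ?I {i, Suc i}))"
        using k by (intro sum.atLeast_Suc_lessThan) auto
      moreover have "Suc (k-1) = k" using k by auto
      ultimately show ?thesis by simp
    qed
    have mid: "real (G T ?I {k-1, Suc (k-1)}) \<ge> real n"
    proof -
      have "Suc (k-1) = k" using k by auto
      moreover have "k - 1 \<in> ?I" "k \<in> ?I" using k by auto
      then have "{k-1, k} \<subseteq> set (leaves T)" using less.prems(3) by blast
      moreover have "card ?I \<le> G T ?I {k-1, k}"
        by (rule G_full) (use k calculation(2) in auto)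
      ultimately show ?thesis by simp
    qed
    have left: "real p * log 2 (real p) \<le> (\<Sum>i\<in>{a..<k-1}. real (G T ?I {i, Suc i}))"
    proof -
      have apk: "a + p = k" using p_def k by auto
      have sub: "{a..<a+p} \<subseteq> set (leaves T)" using less.prems(3) k apk by auto
      have "real p * log 2 (real p) \<le> (\<Sum>i\<in>{a..<a+p-1}. real (G T {a..<a+p} {i, Suc i}))"
        by (rule less.IH[OF pq(3) less.prems(1,2) sub])
      also have "\<dots> \<le> (\<Sum>i\<in>{a..<k-1}. real (G T ?I {i, Suc i}))"
      proof -
        have "a + p = k" using p_def k by auto
        moreover have "G T {a..<k} {i, Suc i} \<le> G T ?I {i, Suc i}" if "i \<in> {a..<k-1}" for i
          by (rule G_mono) (use that k less.prems(3) in auto)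
        ultimately show ?thesis by (auto intro: sum_mono)
      qed
      finally show ?thesis .
    qed
    have right: "real q * log 2 (real q) \<le> (\<Sum>i\<in>{k..<a+n-1}. real (G T ?I {i, Suc i}))"
    proof -
      have kq: "k + q = a + n" using q_def k by auto
      have sub: "{k..<k+q} \<subseteq> set (leaves T)" using less.prems(3) k kq by auto
      have "real q * log 2 (real q) \<le> (\<Sum>i\<in>{k..<k+q-1}. real (G T {k..<k+q} {i, Suc i}))"
        by (rule less.IH[OF pq(4) less.prems(1,2) sub])
      also have "\<dots> \<le> (\<Sum>i\<in>{k..<a+n-1}. real (G T ?I {i, Suc i}))"
      proof -
        have "k + q = a + n" using q_def k by auto
        moreover have "G T {k..<a+n} {i, Suc i} \<le> G T ?I {i, Suc i}" if "i \<in> {k..<a+n-1}" for i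
          by (rule G_mono) (use that k less.prems(3) in auto)
        ultimately show ?thesis by (auto intro: sum_mono)
      qed
      finally show ?thesis .
    qed
    have "real n * log 2 (real n) \<le> real p * log 2 (real p) + real q * log 2 (real q) + real n"
      using ent_ineq[of "real p" "real q"] pq by (simp flip: of_nat_add)
    then show ?thesis using sum_split mid left right by linarith
  qed
qed


function build :: "nat \<Rightarrow> nat \<Rightarrow> nat hctree" where
  "build a n = (if n \<le> 1 then Leaf a else Node [build a (n div 2), build (a + n div 2) (n - n div 2)])"
  by pat_completeness auto
termination by (relation "measure snd") auto

declare build.simps[simp del]

lemma build_leaves: "n \<ge> 1 \<Longrightarrow> leaves (build a n) = [a..<a+n]"
proof (induction a n rule: build.induct)
  case (1 a n)
  show ?case
  proof (cases "n \<le> 1")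
    case True then have "n = 1" using 1 by simp
    then show ?thesis by (subst build.simps) simp
  next
    case False
    then have "leaves (build a n) = [a..<a + n div 2] @ [a + n div 2..<a + n div 2 + (n - n div 2)]"
      using 1 by (subst build.simps) simp
    also have "\<dots> = [a..<a+n]"
      using False by (metis add.assoc le_add1 le_add_diff_inverse upt_add_eq_append div_le_dividend)
    finally show ?thesis .
  qed
qed

lemma build_wf: "wf_hctree (build a n)"
  by (induction a n rule: build.induct) (subst build.simps, auto)

lemma build_up:
  "n \<le> 2 ^ k \<Longrightarrow> (\<Sum>i\<in>{a..<a+n-1}. lca_leaves (build a n) {i, Suc i}) \<le> n * k"
proof (induction k arbitrary: a n)
  case 0
  then show ?case by auto
next
  case (Suc k)
  show ?case
  proof (cases "n \<le> 1")
    case True then show ?thesis by auto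
  next
    case False
    define h where "h = n div 2"
    define L where "L = build a h"
    define R where "R = build (a + h) (n - h)"
    have hs: "h \<ge> 1" "h < n" "h \<le> 2^k" "n - h \<le> 2^k" "n - h \<ge> 1"
      using False Suc.prems h_def by auto
    have T: "build a n = Node [L, R]" using False by (subst build.simps) (simp add: L_def R_def h_def)
    have lL: "leaves L = [a..<a+h]" using build_leaves hs L_def by auto
    have lR: "leaves R = [a+h..<a+n]" using build_leaves hs R_def by auto
    have lT: "leaves (build a n) = [a..<a+n]" using build_leaves False by auto
    let ?f = "\<lambda>i. lca_leaves (build a n) {i, Suc i}"
    have e1: "sum ?f {a..<a+n-1} = sum ?f {a..<a+h-1} + sum ?f {a+h-1..<a+n-1}"
      using hs by (intro sum.atLeastLessThan_concat[symmetric]) auto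
    have e2: "sum ?f {a+h-1..<a+n-1} = ?f (a+h-1) + sum ?f {Suc (a+h-1)..<a+n-1}"
      using hs by (intro sum.atLeast_Suc_lessThan) auto
    have e3: "Suc (a+h-1) = a + h" using hs by auto
    have eq: "sum ?f {a..<a+n-1} = sum ?f {a..<a+h-1} + ?f (a+h-1) + sum ?f {a+h..<a+n-1}"
      using e1 e2 e3 by simp
    have s1: "sum ?f {a..<a+h-1} \<le> (\<Sum>i\<in>{a..<a+h-1}. lca_leaves L {i, Suc i})"
    proof (rule sum_mono)
      fix i assume i: "i \<in> {a..<a+h-1}"
      show "?f i \<le> lca_leaves L {i, Suc i}"
        by (rule lca_le_subtree) (use i T lL self_subtree[of L] in auto)
    qed
    have s1': "(\<Sum>i\<in>{a..<a+h-1}. lca_leaves L {i, Suc i}) \<le> h * k"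
      using Suc.IH[OF hs(3)] L_def by simp
    have s3: "sum ?f {a+h..<a+n-1} \<le> (\<Sum>i\<in>{a+h..<a+n-1}. lca_leaves R {i, Suc i})"
    proof (rule sum_mono)
      fix i assume i: "i \<in> {a+h..<a+n-1}"
      show "?f i \<le> lca_leaves R {i, Suc i}"
        by (rule lca_le_subtree) (use i T lR self_subtree[of R] in auto)
    qed
    have s3': "(\<Sum>i\<in>{a+h..<a+n-1}. lca_leaves R {i, Suc i}) \<le> (n - h) * k"
      using Suc.IH[OF hs(4), of "a+h"] R_def hs by simp
    have s2: "?f (a+h-1) \<le> n"
    proof -
      have "?f (a+h-1) \<le> length (leaves (build a n))"
        by (rule lca_le_length) (use hs lT in auto)
      then show ?thesis using lT by simp
    qed
    have "sum ?f {a..<a+n-1} \<le> h * k + n + (n - h) * k" using eq s1 s1' s2 s3 s3' by linarith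
    also have "\<dots> = n * Suc k" using hs by (simp add: algebra_simps)
    finally show ?thesis .
  qed
qed


lemma cyc_fin: "finite (cycle_edges m)"
proof -
  have "cycle_edges m = (\<lambda>i. {i, (i+1) mod m}) ` {0..<m}" unfolding cycle_edges_def by auto
  then show ?thesis by simp
qed

lemma cyc_img: "m \<ge> 2 \<Longrightarrow> (\<lambda>i. {i, Suc i}) ` {0..<m-1} \<subseteq> cycle_edges m"
proof
  fix e assume m: "m \<ge> 2" and "e \<in> (\<lambda>i. {i, Suc i}) ` {0..<m-1}"
  then obtain i where i: "i < m - 1" "e = {i, Suc i}" by auto
  have "(i + 1) mod m = Suc i" using i by simp
  then have "e = {i, (i+1) mod m}" "i < m" using i by auto
  then show "e \<in> cycle_edges m" unfolding cycle_edges_def by blast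
qed

lemma cyc_sub: "m \<ge> 2 \<Longrightarrow> cycle_edges m \<subseteq> insert {m-1, 0} ((\<lambda>i. {i, Suc i}) ` {0..<m-1})"
proof
  fix e assume "m \<ge> 2" "e \<in> cycle_edges m"
  then obtain i where i: "i < m" "e = {i, (i+1) mod m}" unfolding cycle_edges_def by auto
  show "e \<in> insert {m-1, 0} ((\<lambda>i. {i, Suc i}) ` {0..<m-1})"
  proof (cases "i = m - 1")
    case True then have "(i+1) mod m = 0" using i by auto
    then show ?thesis using i True by auto
  next
    case False then have "(i+1) mod m = Suc i" "i < m - 1" using i by auto
    then show ?thesis using i by auto
  qed
qed

lemma inj_edge: "inj_on (\<lambda>i::nat. {i, Suc i}) A"
proof (rule inj_onI)
  fix x y :: nat assume "{x, Suc x} = {y, Suc y}"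
  then have "x \<in> {y, Suc y}" "y \<in> {x, Suc x}" by blast+
  then show "x = y" by auto
qed

lemma lower_cost:
  assumes m: "m \<ge> 2" and T: "hc_tree {0..<m} T"
  shows "real m * log 2 (real m) \<le> real (hc_cost (cycle_edges m) T)"
proof -
  have wf: "wf_hctree T" "distinct (leaves T)" "set (leaves T) = {0..<m}"
    using T unfolding hc_tree_def by auto
  have "real m * log 2 (real m) \<le> (\<Sum>i\<in>{0..<m-1}. real (G T {0..<m} {i, Suc i}))"
    using path_lb[of T 0 m] wf by simp
  also have "\<dots> \<le> (\<Sum>i\<in>{0..<m-1}. real (lca_leaves T {i, Suc i}))"
  proof (rule sum_mono)
    fix i assume i: "i \<in> {0..<m-1}"
    then have "{i, Suc i} \<subseteq> set (leaves T)" using wf by auto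
    from G_le_lca[OF this, of "{0..<m}"]
    show "real (G T {0..<m} {i, Suc i}) \<le> real (lca_leaves T {i, Suc i})"
      by simp
  qed
  also have "\<dots> = real (\<Sum>i\<in>{0..<m-1}. lca_leaves T {i, Suc i})" by simp
  also have "(\<Sum>i\<in>{0..<m-1}. lca_leaves T {i, Suc i}) =
      (\<Sum>e\<in>(\<lambda>i. {i, Suc i}) ` {0..<m-1}. lca_leaves T e)"
    using sum.reindex[OF inj_edge[of "{0..<m-1}"], of "lca_leaves T"] by (simp add: comp_def)
  also have "\<dots> \<le> hc_cost (cycle_edges m) T"
    unfolding hc_cost_def by (rule sum_mono2[OF cyc_fin cyc_img[OF m]]) auto
  finally show ?thesis by simp
qed

lemma upper_cost:
  assumes m: "m \<ge> 2" and k: "m \<le> 2 ^ k"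
  shows "hc_cost (cycle_edges m) (build 0 m) \<le> m + m * k"
proof -
  let ?T = "build 0 m"
  let ?g = "lca_leaves ?T"
  have lT: "leaves ?T = [0..<m]" using build_leaves[of m 0] m by simp
  have "hc_cost (cycle_edges m) ?T \<le> sum ?g (insert {m-1, 0} ((\<lambda>i. {i, Suc i}) ` {0..<m-1}))"
    unfolding hc_cost_def by (rule sum_mono2[OF _ cyc_sub[OF m]]) auto
  also have "\<dots> \<le> ?g {m-1, 0} + sum ?g ((\<lambda>i. {i, Suc i}) ` {0..<m-1})"
    by (simp add: sum.insert_if)
  also have "sum ?g ((\<lambda>i. {i, Suc i}) ` {0..<m-1}) \<le> sum (?g \<circ> (\<lambda>i. {i, Suc i})) {0..<m-1}"
    by (rule sum_image_le) auto
  also have "sum (?g \<circ> (\<lambda>i. {i, Suc i})) {0..<m-1} \<le> m * k"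
    using build_up[OF k, of 0] by (simp add: comp_def)
  also have "?g {m-1, 0} \<le> m"
    using lca_le_length[of "{m-1,0}" ?T] lT m by simp
  finally show ?thesis by simp
qed

theorem lemma2p4:
  shows "(\<lambda>m. real (OPT (cycle_vertices m) (cycle_edges m)) - real m * log 2 (real m))
           \<in> O(\<lambda>m. real m)"
proof (rule bigoI[where c = 2])
  show "\<forall>\<^sub>F m in at_top. norm (real (OPT (cycle_vertices m) (cycle_edges m)) - real m * log 2 (real m))
          \<le> 2 * norm (real m)"
    unfolding eventually_at_top_linorder
  proof (intro exI allI impI)
    fix m :: nat assume m: "m \<ge> 2"
    let ?S = "{hc_cost (cycle_edges m) T | T. hc_tree {0..<m} T}"
    define k where "k = nat \<lceil>log 2 (real m)\<rceil>"
    have mpos: "real m > 0" using m by simp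
    have lg: "log 2 (real m) \<ge> 0" using m by simp
    have k1: "real k \<le> log 2 (real m) + 1" unfolding k_def using lg by linarith
    have k2: "m \<le> 2 ^ k"
    proof -
      have "real m = 2 powr (log 2 (real m))" using mpos by simp
      also have "\<dots> \<le> 2 powr (real k)" unfolding k_def
        by (rule powr_mono) (use lg in linarith, simp)
      also have "\<dots> = 2 ^ k" by (simp add: powr_realpow)
      finally have "real m \<le> 2 ^ k" .
      then show ?thesis by (metis of_nat_le_iff of_nat_numeral of_nat_power)
    qed
    have bT: "hc_tree {0..<m} (build 0 m)"
      unfolding hc_tree_def using build_leaves[of m 0] build_wf m by simp
    have ne: "?S \<noteq> {}" using bT by blast
    have OPT_eq: "OPT (cycle_vertices m) (cycle_edges m) = Inf ?S"
      unfolding OPT_def cycle_vertices_def by simp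
    have "Inf ?S \<in> ?S" by (rule Inf_nat_def1[OF ne])
    then obtain T where T: "hc_tree {0..<m} T" "Inf ?S = hc_cost (cycle_edges m) T" by auto
    have low: "real m * log 2 (real m) \<le> real (OPT (cycle_vertices m) (cycle_edges m))"
      using lower_cost[OF m T(1)] OPT_eq T(2) by simp
    have "Inf ?S \<le> hc_cost (cycle_edges m) (build 0 m)"
      by (rule cInf_lower) (use bT in auto)
    also have "\<dots> \<le> m + m * k" by (rule upper_cost[OF m k2])
    finally have "real (OPT (cycle_vertices m) (cycle_edges m)) \<le> real m + real m * real k"
      using OPT_eq by (metis of_nat_add of_nat_le_iff of_nat_mult)
    also have "\<dots> \<le> real m + real m * (log 2 (real m) + 1)"
      using k1 by (intro add_left_mono mult_left_mono) auto
    finally have up: "real (OPT (cycle_vertices m) (cycle_edges m)) - real m * log 2 (real m) \<le> 2 * real m"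
      by (simp add: algebra_simps)
    show "norm (real (OPT (cycle_vertices m) (cycle_edges m)) - real m * log 2 (real m))
          \<le> 2 * norm (real m)" using low up by simp
  qed
qed

end
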